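(* Let $G$ be an arbitrary graph and let $B$ be a bipartite graph that is dispersable. Then $\mathrm{mbt}(G\Box B)\leq \mathrm{mbt}(G)+\Delta(B)$.
   Context: A book embedding of a graph $G$ consists of a linear ordering of $V(G)$ (the vertices placed on the spine) together with an assignment of each edge to one of a set of pages such that no two edges on the same page cross, i.e. there are no two edges $uv$, $xy$ on the same page with $u<x<v<y$ in the ordering. A book embedding is matching if on every page each vertex is incident with at most one edge of that page. The matching book thickness $\mathrm{mbt}(G)$ is the minimum number of pages over all matching book embeddings of $G$. $\Delta(G)$ denotes the maximum degree of $G$. A graph $G$ is dispersable if $\mathrm{mbt}(G)=\Delta(G)$. The Cartesian product $G\Box B$ has vertex set $V(G)\times V(B)$, with $(u_1,v_1)$ adjacent to $(u_2,v_2)$ iff either $u_1=u_2$ and $v_1v_2\in E(B)$, or $v_1=v_2$ and $u_1u_2\in E(G)$. *)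

theory Defs
  imports Main
begin

type_synonym 'a graph = "'a set \<times> 'a set set"

definition verts :: "'a graph \<Rightarrow> 'a set" where "verts G = fst G"
definition edges :: "'a graph \<Rightarrow> 'a set set" where "edges G = snd G"

definition graph :: "'a graph \<Rightarrow> bool" where
  "graph G \<longleftrightarrow> finite (verts G) \<and> (\<forall>e\<in>edges G. e \<subseteq> verts G \<and> card e = 2)"

definition degree :: "'a graph \<Rightarrow> 'a \<Rightarrow> nat" where
  "degree G v = card {e \<in> edges G. v \<in> e}"

definition max_degree :: "'a graph \<Rightarrow> nat" where
  "max_degree G = Max (insert 0 (degree G ` verts G))"

text \<open>A linear ordering of the vertices on the spine is given by an injective
  position map into nat. Two edges cross if their endpoints interleave.\<close>
definition crosses :: "('a \<Rightarrow> nat) \<Rightarrow> 'a set \<Rightarrow> 'a set \<Rightarrow> bool" where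
  "crosses pos e f \<longleftrightarrow> (\<exists>u v x y. e = {u, v} \<and> f = {x, y} \<and>
      pos u < pos x \<and> pos x < pos v \<and> pos v < pos y)"

definition matching_book_embedding ::
  "'a graph \<Rightarrow> nat \<Rightarrow> ('a \<Rightarrow> nat) \<Rightarrow> ('a set \<Rightarrow> nat) \<Rightarrow> bool" where
  "matching_book_embedding G k pos page \<longleftrightarrow>
     inj_on pos (verts G) \<and>
     (\<forall>e\<in>edges G. page e < k) \<and>
     (\<forall>e\<in>edges G. \<forall>f\<in>edges G. page e = page f \<longrightarrow> \<not> crosses pos e f) \<and>
     (\<forall>e\<in>edges G. \<forall>f\<in>edges G. e \<noteq> f \<and> page e = page f \<longrightarrow> e \<inter> f = {})"

definition mbt :: "'a graph \<Rightarrow> nat" where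
  "mbt G = (LEAST k. \<exists>pos page. matching_book_embedding G k pos page)"

definition dispersable :: "'a graph \<Rightarrow> bool" where
  "dispersable G \<longleftrightarrow> mbt G = max_degree G"

definition bipartite :: "'a graph \<Rightarrow> bool" where
  "bipartite G \<longleftrightarrow> (\<exists>A \<subseteq> verts G. \<forall>e\<in>edges G. card (e \<inter> A) = 1)"

definition cart_prod :: "'a graph \<Rightarrow> 'b graph \<Rightarrow> ('a \<times> 'b) graph" where
  "cart_prod G B =
     (verts G \<times> verts B,
      {{(u, v1), (u, v2)} | u v1 v2. u \<in> verts G \<and> {v1, v2} \<in> edges B} \<union>
      {{(u1, v), (u2, v)} | u1 u2 v. v \<in> verts B \<and> {u1, u2} \<in> edges G})"

end

theory Submission
  imports Defs
begin

definition PP :: "('a\<Rightarrow>nat) \<Rightarrow> ('b\<Rightarrow>nat) \<Rightarrow> 'b set \<Rightarrow> nat \<Rightarrow> ('a\<times>'b) \<Rightarrow> nat" where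
"PP pG pB A M a = pB (snd a) * M + (if snd a \<in> A then M - 1 - pG (fst a) else pG (fst a))"

lemma PP_div: "pG (fst a) < M \<Longrightarrow> PP pG pB A M a div M = pB (snd a)"
  unfolding PP_def by auto

lemma PP_same: "snd a = snd c \<Longrightarrow> pG (fst a) < M \<Longrightarrow> pG (fst c) < M \<Longrightarrow>
  (PP pG pB A M a < PP pG pB A M c) = (if snd a \<in> A then pG (fst c) < pG (fst a) else pG (fst a) < pG (fst c))"
  unfolding PP_def by auto

lemma PP_inj: "snd a \<in> V \<Longrightarrow> snd c \<in> V \<Longrightarrow> inj_on pB V \<Longrightarrow> inj_on pG W \<Longrightarrow> fst a \<in> W \<Longrightarrow> fst c \<in> W \<Longrightarrow>
  pG (fst a) < M \<Longrightarrow> pG (fst c) < M \<Longrightarrow> PP pG pB A M a = PP pG pB A M c \<Longrightarrow> a = c"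
proof -
  assume h: "snd a \<in> V" "snd c \<in> V" "inj_on pB V" "inj_on pG W" "fst a \<in> W" "fst c \<in> W"
    "pG (fst a) < M" "pG (fst c) < M" "PP pG pB A M a = PP pG pB A M c"
  have "pB (snd a) = pB (snd c)" using PP_div[of pG a M pB A] PP_div[of pG c M pB A] h by metis
  hence s: "snd a = snd c" using h by (meson inj_onD)
  have "pG (fst a) = pG (fst c)" using h s unfolding PP_def by (auto split: if_splits)
  hence "fst a = fst c" using h by (meson inj_onD)
  thus ?thesis using s by (simp add: prod_eq_iff)
qed

lemma not_cross_self: "\<not> crosses pos e e"
  unfolding crosses_def by (auto simp: doubleton_eq_iff)

lemma emb_exists:
  assumes "graph G" shows "\<exists>pos page. matching_book_embedding G (mbt G) pos page"
proof -
  have fV: "finite (verts G)" using assms by (simp add: graph_def)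
  have "edges G \<subseteq> Pow (verts G)" using assms by (auto simp: graph_def)
  hence fE: "finite (edges G)" using fV by (meson finite_Pow_iff finite_subset)
  obtain pos where pos: "bij_betw pos (verts G) {0..<card (verts G)}" using ex_bij_betw_finite_nat[OF fV] by blast
  obtain pg where pg: "bij_betw pg (edges G) {0..<card (edges G)}" using ex_bij_betw_finite_nat[OF fE] by blast
  have "matching_book_embedding G (card (edges G)) pos pg"
    unfolding matching_book_embedding_def
  proof (intro conjI ballI impI)
    show "inj_on pos (verts G)" using pos bij_betw_imp_inj_on by blast
  next fix e assume "e \<in> edges G" thus "pg e < card (edges G)" using pg bij_betwE by fastforce
  next fix e f assume "e \<in> edges G" "f \<in> edges G" "pg e = pg f"
    hence "e = f" using pg by (meson bij_betw_imp_inj_on inj_onD)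
    thus "\<not> crosses pos e f" using not_cross_self by metis
  next fix e f assume "e \<in> edges G" "f \<in> edges G" "e \<noteq> f \<and> pg e = pg f"
    thus "e \<inter> f = {}" using pg by (meson bij_betw_imp_inj_on inj_onD)
  qed
  hence "\<exists>k pos page. matching_book_embedding G k pos page" by blast
  thus ?thesis unfolding mbt_def by (rule LeastI2_ex) blast
qed


lemma GG:
  assumes gG: "graph G" and eG: "matching_book_embedding G k pG qG"
    and ipB: "inj_on pB (verts B)" and Mb: "\<forall>u\<in>verts G. pG u < M"
    and e1: "{u1,u2}\<in>edges G" and f1: "{x1,x2}\<in>edges G" and vw: "v\<in>verts B" "w\<in>verts B"
    and q: "qG {u1,u2} = qG {x1,x2}"
  shows "\<not> crosses (PP pG pB A M) {(u1,v),(u2,v)} {(x1,w),(x2,w)}"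
proof
  let ?P = "PP pG pB A M"
  assume "crosses ?P {(u1,v),(u2,v)} {(x1,w),(x2,w)}"
  then obtain a b c d where e: "{(u1,v),(u2,v)} = {a,b}" and f: "{(x1,w),(x2,w)} = {c,d}"
    and o: "?P a < ?P c" "?P c < ?P b" "?P b < ?P d" unfolding crosses_def by blast
  have uG: "u1 \<in> verts G" "u2 \<in> verts G" "x1 \<in> verts G" "x2 \<in> verts G"
    using gG e1 f1 by (auto simp: graph_def)
  have sa: "snd a = v" "snd b = v" "fst a \<in> verts G" "fst b \<in> verts G" using e uG by (auto simp: doubleton_eq_iff)
  have sc: "snd c = w" "snd d = w" "fst c \<in> verts G" "fst d \<in> verts G" using f uG by (auto simp: doubleton_eq_iff)
  have m: "pG (fst a) < M" "pG (fst b) < M" "pG (fst c) < M" "pG (fst d) < M" using sa sc Mb by auto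
  have "?P a div M \<le> ?P c div M" "?P c div M \<le> ?P b div M" using o by (simp_all add: div_le_mono)
  moreover have "?P a div M = pB v" "?P b div M = pB v" "?P c div M = pB w"
    using PP_div[of pG a M pB A] PP_div[of pG b M pB A] PP_div[of pG c M pB A] m sa sc by auto
  ultimately have "pB w = pB v" by linarith
  hence wv: "w = v" using ipB vw by (meson inj_onD)
  have E: "{u1,u2} = {fst a, fst b}" using arg_cong[OF e, of "image fst"] by simp
  have F: "{x1,x2} = {fst c, fst d}" using arg_cong[OF f, of "image fst"] by simp
  have NC: "\<forall>e\<in>edges G. \<forall>f\<in>edges G. qG e = qG f \<longrightarrow> \<not> crosses pG e f"
    using eG by (simp add: matching_book_embedding_def)
  have nc: "\<not> crosses pG {u1,u2} {x1,x2}" "\<not> crosses pG {x1,x2} {u1,u2}"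
    using bspec[OF bspec[OF NC e1] f1] bspec[OF bspec[OF NC f1] e1] q by simp_all
  show False
  proof (cases "v \<in> A")
    case True
    have "pG (fst d) < pG (fst b)" "pG (fst b) < pG (fst c)" "pG (fst c) < pG (fst a)"
      using o PP_same[of a c pG M pB A] PP_same[of c b pG M pB A] PP_same[of b d pG M pB A] m sa sc wv True by auto
    hence "crosses pG {fst d, fst c} {fst b, fst a}" unfolding crosses_def by blast
    thus False using nc(2) E F by (simp add: insert_commute)
  next
    case False
    have "pG (fst a) < pG (fst c)" "pG (fst c) < pG (fst b)" "pG (fst b) < pG (fst d)"
      using o PP_same[of a c pG M pB A] PP_same[of c b pG M pB A] PP_same[of b d pG M pB A] m sa sc wv False by auto
    hence "crosses pG {fst a, fst b} {fst c, fst d}" unfolding crosses_def by blast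
    thus False using nc(1) E F by simp
  qed
qed

lemma BB:
  assumes gG: "graph G" and gB: "graph B" and eB: "matching_book_embedding B d pB qB"
    and Mb: "\<forall>u\<in>verts G. pG u < M" and Ab: "\<forall>e\<in>edges B. card (e \<inter> A) = 1"
    and e1: "{v1,v2}\<in>edges B" and f1: "{w1,w2}\<in>edges B" and uv: "u\<in>verts G" "x\<in>verts G"
    and q: "qB {v1,v2} = qB {w1,w2}"
  shows "\<not> crosses (PP pG pB A M) {(u,v1),(u,v2)} {(x,w1),(x,w2)}"
proof
  let ?P = "PP pG pB A M"
  assume "crosses ?P {(u,v1),(u,v2)} {(x,w1),(x,w2)}"
  then obtain a b c d where e: "{(u,v1),(u,v2)} = {a,b}" and f: "{(x,w1),(x,w2)} = {c,d}"
    and o: "?P a < ?P c" "?P c < ?P b" "?P b < ?P d" unfolding crosses_def by blast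
  have ipB: "inj_on pB (verts B)" using eB by (simp add: matching_book_embedding_def)
  have vB: "v1 \<in> verts B" "v2 \<in> verts B" "w1 \<in> verts B" "w2 \<in> verts B" "v1 \<noteq> v2" "w1 \<noteq> w2"
    using gB e1 f1 by (auto simp: graph_def card_2_iff doubleton_eq_iff)
  have sa: "fst a = u" "fst b = u" "snd a \<in> verts B" "snd b \<in> verts B" using e vB by (auto simp: doubleton_eq_iff)
  have sc: "fst c = x" "fst d = x" "snd c \<in> verts B" "snd d \<in> verts B" using f vB by (auto simp: doubleton_eq_iff)
  have m: "pG (fst a) < M" "pG (fst b) < M" "pG (fst c) < M" "pG (fst d) < M" using sa sc Mb uv by auto
  have E: "{v1,v2} = {snd a, snd b}" using arg_cong[OF e, of "image snd"] by simp
  have F: "{w1,w2} = {snd c, snd d}" using arg_cong[OF f, of "image snd"] by simp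
  have ab: "snd a \<noteq> snd b" using E vB by auto
  have cd: "snd c \<noteq> snd d" using F vB by auto
  have "?P a div M \<le> ?P c div M" "?P c div M \<le> ?P b div M" "?P b div M \<le> ?P d div M"
    using o by (simp_all add: div_le_mono)
  hence le: "pB (snd a) \<le> pB (snd c)" "pB (snd c) \<le> pB (snd b)" "pB (snd b) \<le> pB (snd d)"
    using PP_div[of pG a M pB A] PP_div[of pG b M pB A] PP_div[of pG c M pB A] PP_div[of pG d M pB A] m by auto
  show False
  proof (cases "{v1,v2} = {w1,w2}")
    case False
    have MB: "\<forall>e\<in>edges B. \<forall>f\<in>edges B. e \<noteq> f \<and> qB e = qB f \<longrightarrow> e \<inter> f = {}"
      "\<forall>e\<in>edges B. \<forall>f\<in>edges B. qB e = qB f \<longrightarrow> \<not> crosses pB e f"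
      using eB by (simp_all add: matching_book_embedding_def)
    have disj: "{v1,v2} \<inter> {w1,w2} = {}" using bspec[OF bspec[OF MB(1) e1] f1] q False by simp
    have nc: "\<not> crosses pB {v1,v2} {w1,w2}" using bspec[OF bspec[OF MB(2) e1] f1] q by simp
    have ne: "snd a \<noteq> snd c" "snd c \<noteq> snd b" "snd b \<noteq> snd d" using disj E F by auto
    have "pB (snd a) \<noteq> pB (snd c)" "pB (snd c) \<noteq> pB (snd b)" "pB (snd b) \<noteq> pB (snd d)"
      using ne ipB sa sc by (meson inj_onD)+
    hence "pB (snd a) < pB (snd c)" "pB (snd c) < pB (snd b)" "pB (snd b) < pB (snd d)"
      using le by auto
    hence "crosses pB {snd a, snd b} {snd c, snd d}" unfolding crosses_def by blast
    thus False using nc E F by simp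
  next
    case True
    hence EF: "{snd a, snd b} = {snd c, snd d}" using E F by simp
    have "snd c = snd a \<and> snd d = snd b"
    proof (rule ccontr)
      assume "\<not> ?thesis"
      hence "snd c = snd b" "snd d = snd a" using EF ab cd by (auto simp: doubleton_eq_iff)
      hence "pB (snd a) = pB (snd b)" using le by simp
      thus False using ab ipB sa by (meson inj_onD)
    qed
    hence cdab: "snd c = snd a" "snd d = snd b" by auto
    have "card ({v1,v2} \<inter> A) = 1" using Ab e1 by blast
    hence xo: "(snd a \<in> A) \<noteq> (snd b \<in> A)" using E ab
      by (cases "snd a \<in> A"; cases "snd b \<in> A") (auto simp: Int_insert_left)
    have r1: "if snd a \<in> A then pG x < pG u else pG u < pG x"
      using PP_same[of a c pG M pB A] o(1) cdab m sa sc by (simp split: if_splits)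
    have r2: "if snd b \<in> A then pG x < pG u else pG u < pG x"
      using PP_same[of b d pG M pB A] o(3) cdab m sa sc by (simp split: if_splits)
    show False using r1 r2 xo by (auto split: if_splits)
  qed
qed


definition QQ :: "nat \<Rightarrow> ('a set \<Rightarrow> nat) \<Rightarrow> ('b set \<Rightarrow> nat) \<Rightarrow> ('a\<times>'b) set \<Rightarrow> nat" where
"QQ k qG qB e = (if card (fst ` e) = 1 then k + qB (snd ` e) else qG (fst ` e))"

lemma disj_by: "\<forall>p\<in>e. g p \<in> S \<Longrightarrow> \<forall>p\<in>f. g p \<in> T \<Longrightarrow> S \<inter> T = {} \<Longrightarrow> e \<inter> f = {}" by blast

lemma QQ_B: "QQ k qG qB {(u,v1),(u,v2)} = k + qB {v1,v2}"
  unfolding QQ_def by simp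

lemma QQ_G: "u1 \<noteq> u2 \<Longrightarrow> QQ k qG qB {(u1,v),(u2,v)} = qG {u1,u2}"
  unfolding QQ_def by simp

lemma edge2: "graph G \<Longrightarrow> {u1,u2} \<in> edges G \<Longrightarrow> u1 \<noteq> u2 \<and> u1 \<in> verts G \<and> u2 \<in> verts G"
proof -
  assume "graph G" "{u1,u2} \<in> edges G"
  hence c: "card {u1,u2} = 2" and "{u1,u2} \<subseteq> verts G" unfolding graph_def by auto
  moreover have "u1 \<noteq> u2" using c by (cases "u1 = u2") auto
  ultimately show ?thesis by simp
qed

lemma cp_edges: "e \<in> edges (cart_prod G B) \<Longrightarrow>
   (\<exists>u v1 v2. e = {(u,v1),(u,v2)} \<and> u\<in>verts G \<and> {v1,v2}\<in>edges B) \<or>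
   (\<exists>u1 u2 v. e = {(u1,v),(u2,v)} \<and> v\<in>verts B \<and> {u1,u2}\<in>edges G)"
  unfolding cart_prod_def edges_def verts_def by auto

lemma cp_verts: "verts (cart_prod G B) = verts G \<times> verts B"
  unfolding cart_prod_def verts_def by simp

lemma prod_emb:
  assumes gG: "graph G" and gB: "graph B"
    and Ab: "\<forall>e\<in>edges B. card (e \<inter> A) = 1"
    and eG: "matching_book_embedding G k pG qG"
    and eB: "matching_book_embedding B d pB qB"
    and Mb: "\<forall>u\<in>verts G. pG u < M"
  shows "matching_book_embedding (cart_prod G B) (k+d) (PP pG pB A M) (QQ k qG qB)"
  unfolding matching_book_embedding_def
proof (intro conjI ballI impI)
  have ipB: "inj_on pB (verts B)" using eB by (simp add: matching_book_embedding_def)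
  have ipG: "inj_on pG (verts G)" using eG by (simp add: matching_book_embedding_def)
  have qGk: "\<forall>e\<in>edges G. qG e < k" using eG by (simp add: matching_book_embedding_def)
  have qBd: "\<forall>e\<in>edges B. qB e < d" using eB by (simp add: matching_book_embedding_def)
  have MG: "\<forall>e\<in>edges G. \<forall>f\<in>edges G. e \<noteq> f \<and> qG e = qG f \<longrightarrow> e \<inter> f = {}"
    using eG by (simp add: matching_book_embedding_def)
  have MB: "\<forall>e\<in>edges B. \<forall>f\<in>edges B. e \<noteq> f \<and> qB e = qB f \<longrightarrow> e \<inter> f = {}"
    using eB by (simp add: matching_book_embedding_def)
  show "inj_on (PP pG pB A M) (verts (cart_prod G B))"
  proof (rule inj_onI)
    fix a c assume "a \<in> verts (cart_prod G B)" "c \<in> verts (cart_prod G B)" "PP pG pB A M a = PP pG pB A M c"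
    thus "a = c" using PP_inj[of a "verts B" c pB pG "verts G" M A] ipB ipG Mb
      by (auto simp: cp_verts mem_Times_iff)
  qed
next
  fix e assume "e \<in> edges (cart_prod G B)"
  thus "QQ k qG qB e < k + d"
  proof (rule cp_edges[THEN disjE])
    assume "\<exists>u v1 v2. e = {(u,v1),(u,v2)} \<and> u\<in>verts G \<and> {v1,v2}\<in>edges B"
    then obtain u v1 v2 where "e = {(u,v1),(u,v2)}" "{v1,v2}\<in>edges B" by blast
    moreover have "qB {v1,v2} < d" using eB \<open>{v1,v2}\<in>edges B\<close> by (auto simp: matching_book_embedding_def)
    ultimately show ?thesis using QQ_B[of k qG qB u v1 v2] by simp
  next
    assume "\<exists>u1 u2 v. e = {(u1,v),(u2,v)} \<and> v\<in>verts B \<and> {u1,u2}\<in>edges G"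
    then obtain u1 u2 v where "e = {(u1,v),(u2,v)}" "{u1,u2}\<in>edges G" by blast
    moreover have "qG {u1,u2} < k" using eG \<open>{u1,u2}\<in>edges G\<close> by (auto simp: matching_book_embedding_def)
    moreover have "u1 \<noteq> u2" using edge2[OF gG \<open>{u1,u2}\<in>edges G\<close>] by simp
    ultimately show ?thesis using QQ_G[of u1 u2 k qG qB v] by simp
  qed
next
  fix e f assume e: "e \<in> edges (cart_prod G B)" and f: "f \<in> edges (cart_prod G B)"
  have qGk: "\<forall>e\<in>edges G. qG e < k" using eG by (simp add: matching_book_embedding_def)
  have MG: "\<forall>e\<in>edges G. \<forall>f\<in>edges G. e \<noteq> f \<and> qG e = qG f \<longrightarrow> e \<inter> f = {}"
    using eG by (simp add: matching_book_embedding_def)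
  have MB: "\<forall>e\<in>edges B. \<forall>f\<in>edges B. e \<noteq> f \<and> qB e = qB f \<longrightarrow> e \<inter> f = {}"
    using eB by (simp add: matching_book_embedding_def)
  have ipB: "inj_on pB (verts B)" using eB by (simp add: matching_book_embedding_def)
  have main: "\<not> crosses (PP pG pB A M) e f \<and> (e \<noteq> f \<longrightarrow> e \<inter> f = {})"
    if q: "QQ k qG qB e = QQ k qG qB f"
  proof -
    from cp_edges[OF e] show ?thesis
    proof
      assume "\<exists>u v1 v2. e = {(u,v1),(u,v2)} \<and> u\<in>verts G \<and> {v1,v2}\<in>edges B"
      then obtain u v1 v2 where ee: "e = {(u,v1),(u,v2)}" "u\<in>verts G" "{v1,v2}\<in>edges B" by blast
      from cp_edges[OF f] show ?thesis
      proof
        assume "\<exists>u v1 v2. f = {(u,v1),(u,v2)} \<and> u\<in>verts G \<and> {v1,v2}\<in>edges B"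
        then obtain x w1 w2 where ff: "f = {(x,w1),(x,w2)}" "x\<in>verts G" "{w1,w2}\<in>edges B" by blast
        have qq: "qB {v1,v2} = qB {w1,w2}" using q ee ff QQ_B[of k qG qB u v1 v2] QQ_B[of k qG qB x w1 w2] by simp
        have nc: "\<not> crosses (PP pG pB A M) e f"
          using BB[OF gG gB eB Mb Ab ee(3) ff(3) ee(2) ff(2) qq] ee ff by simp
        have "e \<inter> f = {}" if ne: "e \<noteq> f"
        proof (cases "{v1,v2} = {w1,w2}")
          case True
          have "e = Pair u ` {v1,v2}" "f = Pair x ` {w1,w2}" using ee(1) ff(1) by simp_all
          hence "u \<noteq> x" using ne True by (cases "u = x") simp_all
          moreover have "\<forall>p\<in>e. fst p \<in> {u}" "\<forall>p\<in>f. fst p \<in> {x}" using ee(1) ff(1) by simp_all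
          ultimately show ?thesis using disj_by[of e fst "{u}" f "{x}"] by simp
        next
          case False
          hence D: "{v1,v2} \<inter> {w1,w2} = {}" using bspec[OF bspec[OF MB ee(3)] ff(3)] qq by simp
          have "\<forall>p\<in>e. snd p \<in> {v1,v2}" "\<forall>p\<in>f. snd p \<in> {w1,w2}" using ee(1) ff(1) by simp_all
          thus ?thesis using D disj_by[of e snd "{v1,v2}" f "{w1,w2}"] by simp
        qed
        thus ?thesis using nc by blast
      next
        assume "\<exists>u1 u2 v. f = {(u1,v),(u2,v)} \<and> v\<in>verts B \<and> {u1,u2}\<in>edges G"
        then obtain x1 x2 w where ff: "f = {(x1,w),(x2,w)}" "{x1,x2}\<in>edges G" by blast
        have "QQ k qG qB f < k" using ff QQ_G[of x1 x2 k qG qB w] edge2[OF gG ff(2)] qGk ff(2) by auto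
        moreover have "QQ k qG qB e \<ge> k" using ee QQ_B[of k qG qB u v1 v2] by simp
        ultimately show ?thesis using q by simp
      qed
    next
      assume "\<exists>u1 u2 v. e = {(u1,v),(u2,v)} \<and> v\<in>verts B \<and> {u1,u2}\<in>edges G"
      then obtain u1 u2 v where ee: "e = {(u1,v),(u2,v)}" "v\<in>verts B" "{u1,u2}\<in>edges G" by blast
      from cp_edges[OF f] show ?thesis
      proof
        assume "\<exists>u v1 v2. f = {(u,v1),(u,v2)} \<and> u\<in>verts G \<and> {v1,v2}\<in>edges B"
        then obtain x w1 w2 where ff: "f = {(x,w1),(x,w2)}" by blast
        have "QQ k qG qB e < k" using ee QQ_G[of u1 u2 k qG qB v] edge2[OF gG ee(3)] qGk ee(3) by auto
        moreover have "QQ k qG qB f \<ge> k" using ff QQ_B[of k qG qB x w1 w2] by simp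
        ultimately show ?thesis using q by simp
      next
        assume "\<exists>u1 u2 v. f = {(u1,v),(u2,v)} \<and> v\<in>verts B \<and> {u1,u2}\<in>edges G"
        then obtain x1 x2 w where ff: "f = {(x1,w),(x2,w)}" "w\<in>verts B" "{x1,x2}\<in>edges G" by blast
        have qq: "qG {u1,u2} = qG {x1,x2}" using q ee ff QQ_G[of u1 u2 k qG qB v] QQ_G[of x1 x2 k qG qB w] edge2[OF gG ee(3)] edge2[OF gG ff(3)] by simp
        have nc: "\<not> crosses (PP pG pB A M) e f"
          using GG[OF gG eG ipB Mb ee(3) ff(3) ee(2) ff(2) qq] ee ff by simp
        have "e \<inter> f = {}" if ne: "e \<noteq> f"
        proof (cases "v = w")
          case True
          have "e = (\<lambda>y. (y,v)) ` {u1,u2}" "f = (\<lambda>y. (y,w)) ` {x1,x2}" using ee(1) ff(1) by simp_all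
          hence "{u1,u2} \<noteq> {x1,x2}" using ne True by (cases "{u1,u2} = {x1,x2}") simp_all
          hence D: "{u1,u2} \<inter> {x1,x2} = {}" using bspec[OF bspec[OF MG ee(3)] ff(3)] qq by simp
          have "\<forall>p\<in>e. fst p \<in> {u1,u2}" "\<forall>p\<in>f. fst p \<in> {x1,x2}" using ee(1) ff(1) by simp_all
          thus ?thesis using D disj_by[of e fst "{u1,u2}" f "{x1,x2}"] by simp
        next
          case False
          have "\<forall>p\<in>e. snd p \<in> {v}" "\<forall>p\<in>f. snd p \<in> {w}" using ee(1) ff(1) by simp_all
          thus ?thesis using False disj_by[of e snd "{v}" f "{w}"] by simp
        qed
        thus ?thesis using nc by blast
      qed
    qed
  qed
  { assume "QQ k qG qB e = QQ k qG qB f"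
    thus "\<not> crosses (PP pG pB A M) e f" using main by blast }
  { assume "e \<noteq> f \<and> QQ k qG qB e = QQ k qG qB f"
    thus "e \<inter> f = {}" using main by blast }
qed

theorem lemma2p5:
  fixes G :: "'a graph" and B :: "'b graph"
  assumes "graph G" and "graph B" and "bipartite B" and "dispersable B"
  shows "mbt (cart_prod G B) \<le> mbt G + max_degree B"
proof -
  obtain pG qG where eG: "matching_book_embedding G (mbt G) pG qG" using emb_exists[OF assms(1)] by blast
  obtain pB qB where eB: "matching_book_embedding B (mbt B) pB qB" using emb_exists[OF assms(2)] by blast
  obtain A where Ab: "\<forall>e\<in>edges B. card (e \<inter> A) = 1" using assms(3) unfolding bipartite_def by blast
  define M where "M = Suc (Max (insert 0 (pG ` verts G)))"
  have fV: "finite (verts G)" using assms(1) by (simp add: graph_def)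
  have Mb: "\<forall>u\<in>verts G. pG u < M"
  proof
    fix u assume "u \<in> verts G"
    hence "pG u \<le> Max (insert 0 (pG ` verts G))" using fV by (intro Max_ge) auto
    thus "pG u < M" unfolding M_def by simp
  qed
  have "matching_book_embedding (cart_prod G B) (mbt G + mbt B) (PP pG pB A M) (QQ (mbt G) qG qB)"
    by (rule prod_emb[OF assms(1,2) Ab eG eB Mb])
  hence "mbt (cart_prod G B) \<le> mbt G + mbt B" unfolding mbt_def[of "cart_prod G B"] by (intro Least_le) blast
  thus ?thesis using assms(4) by (simp add: dispersable_def)
qed

end
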